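(* Let $\langle X,\tau,T\rangle$ be a conditional space and $\mathrm{Cm}=\langle\mathcal{P}(X),\to_T\rangle$ its full complex algebra. With $x,y,z$ ranging over $X$ and $Y,Z$ over closed subsets of $X$, and the inequalities in $\mathrm{Cm}$ holding for all elements: (T3* ) $(a\to c)\wedge(b\to c)\le(a\vee b)\to c$ holds in $\mathrm{Cm}$ iff for all $x,y$ and nonempty $Y$, $T(x,Y,y)$ implies there is $z\in Y$ with $T(x,\{z\},y)$; (T4) $a\to b\le c\to(a\to b)$ holds in $\mathrm{Cm}$ iff $T(x,Y,y)$ and $T(y,Z,z)$ imply $T(x,Z,z)$; (T5) $a\wedge(a\to b)\le b$ holds in $\mathrm{Cm}$ iff $T(x,\{x\},x)$ for all $x$; (T6) $a\to b\le\neg b\to\neg a$ holds in $\mathrm{Cm}$ iff $T(x,Y,y)$ implies there is $z\in Y$ with $T(x,\{y\},z)$; (T7) $\neg(a\to b)\le c\to\neg(a\to b)$ holds in $\mathrm{Cm}$ iff $T(x,Y,y)$ and $T(x,Z,z)$ imply $T(y,Z,z)$; (T8) $(1\to(\neg a\vee b))\wedge(b\to c)\le a\to c$ holds in $\mathrm{Cm}$ iff for all $x,y,Y,Z$: $T(x,Y,y)$ and $T(x,X)\cap Y\subseteq Z$ imply $T(x,Z,y)$.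
   Context: A conditional space is $\langle X,\tau,T\rangle$ with $\langle X,\tau\rangle$ a Boolean (compact, Hausdorff, zero-dimensional) space and $T\subseteq X\times\mathcal{C}(\tau)\times X$ ($\mathcal{C}(\tau)$ the closed sets) satisfying: (T1) $T(x,Y)=\{y:T(x,Y,y)\}$ is closed for all $x$ and closed $Y$; (T2) for clopen $U,V$, $U\to_T V$ is clopen; (T3) for closed $Y$, $T(x,Y,y)$ iff $T(x,U,y)$ for all clopen $U\supseteq Y$. For any $U,V\subseteq X$, $U\to_T V=\{x\in X:\text{for all closed } Z\subseteq U,\ T(x,Z)\subseteq V\}$. In $\mathrm{Cm}$, $\wedge,\vee,\neg,1$ are intersection, union, complement and $X$. *)

theory Defs
  imports "HOL-Analysis.Analysis"
begin

text \<open>The Boolean space is the whole carrier UNIV of a topological type 'a;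
  the ternary relation T is a predicate on points, (closed) sets, points.\<close>

definition zero_dimensional_space :: "'a::topological_space itself \<Rightarrow> bool" where
  "zero_dimensional_space _ \<longleftrightarrow>
     (\<forall>U::'a set. open U \<longrightarrow> (\<exists>B. (\<forall>b\<in>B. open b \<and> closed b) \<and> U = \<Union>B))"

definition boolean_space :: "'a::topological_space itself \<Rightarrow> bool" where
  "boolean_space t \<longleftrightarrow> compact (UNIV::'a set)
     \<and> (\<forall>x y::'a. x \<noteq> y \<longrightarrow> (\<exists>U V. open U \<and> open V \<and> x \<in> U \<and> y \<in> V \<and> U \<inter> V = {}))
     \<and> zero_dimensional_space t"

definition Tset :: "('a \<Rightarrow> 'a set \<Rightarrow> 'a \<Rightarrow> bool) \<Rightarrow> 'a \<Rightarrow> 'a set \<Rightarrow> 'a set" where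
  "Tset T x Y = {y. T x Y y}"

definition cond_arrow :: "('a::topological_space \<Rightarrow> 'a set \<Rightarrow> 'a \<Rightarrow> bool) \<Rightarrow> 'a set \<Rightarrow> 'a set \<Rightarrow> 'a set" where
  "cond_arrow T U V = {x. \<forall>Z. closed Z \<and> Z \<subseteq> U \<longrightarrow> Tset T x Z \<subseteq> V}"

definition conditional_space :: "('a::topological_space \<Rightarrow> 'a set \<Rightarrow> 'a \<Rightarrow> bool) \<Rightarrow> bool" where
  "conditional_space T \<longleftrightarrow> boolean_space TYPE('a)
     \<and> (\<forall>x Y y. T x Y y \<longrightarrow> closed Y)
     \<and> (\<forall>x Y. closed Y \<longrightarrow> closed (Tset T x Y))
     \<and> (\<forall>U V. open U \<and> closed U \<and> open V \<and> closed V \<longrightarrow>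
          open (cond_arrow T U V) \<and> closed (cond_arrow T U V))
     \<and> (\<forall>x Y y. closed Y \<longrightarrow>
          (T x Y y \<longleftrightarrow> (\<forall>U. open U \<and> closed U \<and> Y \<subseteq> U \<longrightarrow> T x U y)))"

end

theory Submission
  imports Defs
begin

lemma cs_closedY: assumes "conditional_space T" "T x Y y" shows "closed Y"
  using assms(1) unfolding conditional_space_def using assms(2) by (meson conjunct1 conjunct2)

lemma cs_Tset_closed: assumes "conditional_space T" "closed Y" shows "closed (Tset T x Y)"
proof -
  have "\<forall>x Y. closed Y \<longrightarrow> closed (Tset T x Y)" using assms(1) unfolding conditional_space_def by (meson conjunct1 conjunct2)
  thus ?thesis using assms(2) by simp
qed

lemma cs_T3: assumes "conditional_space T" "closed Y" shows
   "T x Y y \<longleftrightarrow> (\<forall>U. open U \<and> closed U \<and> Y \<subseteq> U \<longrightarrow> T x U y)"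
proof -
  have "\<forall>x Y y. closed Y \<longrightarrow>
          (T x Y y \<longleftrightarrow> (\<forall>U. open U \<and> closed U \<and> Y \<subseteq> U \<longrightarrow> T x U y))" using assms(1) unfolding conditional_space_def by (meson conjunct1 conjunct2)
  thus ?thesis using assms(2) by simp
qed

lemma cs_compact: assumes "conditional_space (T::'a::topological_space \<Rightarrow> _)" shows "compact (UNIV::'a set)"
  using assms unfolding conditional_space_def boolean_space_def by (meson conjunct1)

lemma cs_single: "conditional_space (T::'a::topological_space \<Rightarrow> _) \<Longrightarrow> closed {z::'a}"
proof -
  assume c: "conditional_space T"
  hence H: "\<forall>x y::'a. x \<noteq> y \<longrightarrow> (\<exists>U V. open U \<and> open V \<and> x \<in> U \<and> y \<in> V \<and> U \<inter> V = {})"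
    unfolding conditional_space_def boolean_space_def by simp
  have "open (- {z})"
  proof (subst open_subopen, intro ballI)
    fix w assume "w \<in> - {z}"
    hence "z \<noteq> w" by simp
    then obtain U V where "open U" "open V" "z \<in> U" "w \<in> V" "U \<inter> V = {}" using H by metis
    thus "\<exists>V. open V \<and> w \<in> V \<and> V \<subseteq> - {z}" by blast
  qed
  thus ?thesis by (simp add: closed_def)
qed

lemma cs_mono:
  assumes c: "conditional_space T" and "closed Y" "closed Y'" "Y \<subseteq> Y'" "T x Y y"
  shows "T x Y' y"
proof -
  have "\<forall>U. open U \<and> closed U \<and> Y \<subseteq> U \<longrightarrow> T x U y" using cs_T3[OF c assms(2)] assms(5) by simp
  hence "\<forall>U. open U \<and> closed U \<and> Y' \<subseteq> U \<longrightarrow> T x U y" using assms(4) by auto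
  thus ?thesis using cs_T3[OF c assms(3)] by simp
qed

lemma arrow_closed:
  assumes c: "conditional_space T" and a: "closed a"
  shows "x \<in> cond_arrow T a b \<longleftrightarrow> Tset T x a \<subseteq> b"
proof
  assume "x \<in> cond_arrow T a b" thus "Tset T x a \<subseteq> b" using a unfolding cond_arrow_def by simp
next
  assume h: "Tset T x a \<subseteq> b"
  show "x \<in> cond_arrow T a b" unfolding cond_arrow_def
  proof (intro CollectI allI impI subsetI)
    fix Z y assume Z: "closed Z \<and> Z \<subseteq> a" and "y \<in> Tset T x Z"
    hence "T x Z y" by (simp add: Tset_def)
    hence "T x a y" using cs_mono[OF c _ a] Z by blast
    thus "y \<in> b" using h by (simp add: Tset_def subset_iff)
  qed
qed

lemma arrowI:
  assumes "\<And>Z y. closed Z \<and> Z \<subseteq> a \<Longrightarrow> y \<in> Tset T x Z \<Longrightarrow> y \<in> b"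
  shows "x \<in> cond_arrow T a b"
  using assms unfolding cond_arrow_def by blast

lemma arrowD:
  assumes "x \<in> cond_arrow T a b" "closed Z" "Z \<subseteq> a" "T x Z y"
  shows "y \<in> b"
  using assms unfolding cond_arrow_def Tset_def by blast

lemma arrow_self: "conditional_space T \<Longrightarrow> closed a \<Longrightarrow> x \<in> cond_arrow T a (Tset T x a)"
  using arrow_closed by blast

theorem theorem9p9:
  fixes T :: "'a::topological_space \<Rightarrow> 'a set \<Rightarrow> 'a \<Rightarrow> bool"
  assumes "conditional_space T"
  shows
   "((\<forall>a b c. cond_arrow T a c \<inter> cond_arrow T b c \<subseteq> cond_arrow T (a \<union> b) c) \<longleftrightarrow>
      (\<forall>x y Y. closed Y \<and> Y \<noteq> {} \<and> T x Y y \<longrightarrow> (\<exists>z\<in>Y. T x {z} y)))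
  \<and> ((\<forall>a b c. cond_arrow T a b \<subseteq> cond_arrow T c (cond_arrow T a b)) \<longleftrightarrow>
      (\<forall>x y z Y Z. closed Y \<and> closed Z \<and> T x Y y \<and> T y Z z \<longrightarrow> T x Z z))
  \<and> ((\<forall>a b. a \<inter> cond_arrow T a b \<subseteq> b) \<longleftrightarrow> (\<forall>x. T x {x} x))
  \<and> ((\<forall>a b. cond_arrow T a b \<subseteq> cond_arrow T (- b) (- a)) \<longleftrightarrow>
      (\<forall>x y Y. closed Y \<and> T x Y y \<longrightarrow> (\<exists>z\<in>Y. T x {y} z)))
  \<and> ((\<forall>a b c. - cond_arrow T a b \<subseteq> cond_arrow T c (- cond_arrow T a b)) \<longleftrightarrow>
      (\<forall>x y z Y Z. closed Y \<and> closed Z \<and> T x Y y \<and> T x Z z \<longrightarrow> T y Z z))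
  \<and> ((\<forall>a b c. cond_arrow T UNIV (- a \<union> b) \<inter> cond_arrow T b c \<subseteq> cond_arrow T a c) \<longleftrightarrow>
      (\<forall>x y Y Z. closed Y \<and> closed Z \<and> T x Y y \<and> Tset T x UNIV \<inter> Y \<subseteq> Z \<longrightarrow> T x Z y))"
proof (intro conjI)
  note c = assms
  note sing = cs_single[OF c]
  show "(\<forall>a b c. cond_arrow T a c \<inter> cond_arrow T b c \<subseteq> cond_arrow T (a \<union> b) c) \<longleftrightarrow>
      (\<forall>x y Y. closed Y \<and> Y \<noteq> {} \<and> T x Y y \<longrightarrow> (\<exists>z\<in>Y. T x {z} y))"
  proof
    assume A: "\<forall>a b c. cond_arrow T a c \<inter> cond_arrow T b c \<subseteq> cond_arrow T (a \<union> b) c"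
    show "\<forall>x y Y. closed Y \<and> Y \<noteq> {} \<and> T x Y y \<longrightarrow> (\<exists>z\<in>Y. T x {z} y)"
    proof (intro allI impI, rule ccontr)
      fix x y Y assume h: "closed Y \<and> Y \<noteq> {} \<and> T x Y y" and n: "\<not> (\<exists>z\<in>Y. T x {z} y)"
      define UU where "UU = {U. open U \<and> closed U \<and> \<not> T x U y}"
      have cov: "Y \<subseteq> \<Union>UU"
      proof
        fix z assume "z \<in> Y"
        hence "\<not> T x {z} y" using n by blast
        hence "\<not> (\<forall>U. open U \<and> closed U \<and> {z} \<subseteq> U \<longrightarrow> T x U y)"
          using cs_T3[OF c sing, of x z y] by simp
        then obtain U where "open U" "closed U" "{z} \<subseteq> U" "\<not> T x U y"
          by blast
        thus "z \<in> \<Union>UU" unfolding UU_def by blast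
      qed
      have "compact (UNIV \<inter> Y)" using h compact_Int_closed[OF cs_compact[OF c]] by blast
      hence "compact Y" by simp
      then obtain F where F: "F \<subseteq> UU" "finite F" "Y \<subseteq> \<Union>F"
        using compactE[OF _ cov] unfolding UU_def by blast
      have "F \<noteq> {}" using F h by blast
      have "x \<in> cond_arrow T (\<Union>F) (- {y})" using F(2) \<open>F \<noteq> {}\<close> F(1)
      proof (induction F rule: finite_ne_induct)
        case (singleton U)
        hence "closed U" "\<not> T x U y" unfolding UU_def by auto
        moreover have "Tset T x U \<subseteq> - {y}" using \<open>\<not> T x U y\<close> unfolding Tset_def by auto
        ultimately show ?case using arrow_closed[OF c] by simp
      next
        case (insert U F)
        have "closed U" "\<not> T x U y" using insert.prems unfolding UU_def by auto
        moreover have "Tset T x U \<subseteq> - {y}" using \<open>\<not> T x U y\<close> unfolding Tset_def by auto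
        ultimately have "x \<in> cond_arrow T U (- {y})" using arrow_closed[OF c] by simp
        moreover have "x \<in> cond_arrow T (\<Union>F) (- {y})" using insert by blast
        ultimately have "x \<in> cond_arrow T U (- {y}) \<inter> cond_arrow T (\<Union>F) (- {y})" by blast
        hence "x \<in> cond_arrow T (U \<union> \<Union>F) (- {y})" using A by blast
        thus ?case by simp
      qed
      hence "Tset T x Y \<subseteq> - {y}" using h F(3) unfolding cond_arrow_def by blast
      thus False using h unfolding Tset_def by blast
    qed
  next
    assume B: "\<forall>x y Y. closed Y \<and> Y \<noteq> {} \<and> T x Y y \<longrightarrow> (\<exists>z\<in>Y. T x {z} y)"
    show "\<forall>a b c. cond_arrow T a c \<inter> cond_arrow T b c \<subseteq> cond_arrow T (a \<union> b) c"
    proof (intro allI subsetI)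
      fix a b d x assume x: "x \<in> cond_arrow T a d \<inter> cond_arrow T b d"
      show "x \<in> cond_arrow T (a \<union> b) d"
        
      proof (rule arrowI)
        fix Z y assume Z: "closed Z \<and> Z \<subseteq> a \<union> b" and y: "y \<in> Tset T x Z"
        show "y \<in> d"
        proof (cases "Z = {}")
          case True thus ?thesis using x y unfolding cond_arrow_def by blast
        next
          case False
          then obtain z where "z \<in> Z" "T x {z} y" using B Z y unfolding Tset_def by blast
          hence "z \<in> a \<or> z \<in> b" using Z by blast
          thus ?thesis
          proof
            assume "z \<in> a" hence "{z} \<subseteq> a" by simp
            moreover have "x \<in> cond_arrow T a d" using x by blast
            ultimately show ?thesis using arrowD[of x T a d "{z}" y] sing[of z] \<open>T x {z} y\<close> by blast
          next
            assume "z \<in> b" hence "{z} \<subseteq> b" by simp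
            moreover have "x \<in> cond_arrow T b d" using x by blast
            ultimately show ?thesis using arrowD[of x T b d "{z}" y] sing[of z] \<open>T x {z} y\<close> by blast
          qed
        qed
      qed
    qed
  qed
  show "(\<forall>a b c. cond_arrow T a b \<subseteq> cond_arrow T c (cond_arrow T a b)) \<longleftrightarrow>
      (\<forall>x y z Y Z. closed Y \<and> closed Z \<and> T x Y y \<and> T y Z z \<longrightarrow> T x Z z)"
  proof
    assume A: "\<forall>a b c. cond_arrow T a b \<subseteq> cond_arrow T c (cond_arrow T a b)"
    show "\<forall>x y z Y Z. closed Y \<and> closed Z \<and> T x Y y \<and> T y Z z \<longrightarrow> T x Z z"
    proof (intro allI impI)
      fix x y z Y Z assume h: "closed Y \<and> closed Z \<and> T x Y y \<and> T y Z z"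
      have "x \<in> cond_arrow T Z (Tset T x Z)" using arrow_self[OF c] h by blast
      hence "x \<in> cond_arrow T Y (cond_arrow T Z (Tset T x Z))" using A by blast
      hence "y \<in> cond_arrow T Z (Tset T x Z)" using h arrow_closed[OF c] unfolding Tset_def by blast
      thus "T x Z z" using h arrow_closed[OF c] unfolding Tset_def by blast
    qed
  next
    assume B: "\<forall>x y z Y Z. closed Y \<and> closed Z \<and> T x Y y \<and> T y Z z \<longrightarrow> T x Z z"
    show "\<forall>a b c. cond_arrow T a b \<subseteq> cond_arrow T c (cond_arrow T a b)"
    proof (intro allI subsetI)
      fix a b d x assume x: "x \<in> cond_arrow T a b"
      show "x \<in> cond_arrow T d (cond_arrow T a b)" 
      proof (rule arrowI)
        fix Z y assume Z: "closed Z \<and> Z \<subseteq> d" and y: "y \<in> Tset T x Z"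
        show "y \<in> cond_arrow T a b" 
        proof (rule arrowI)
          fix W z assume W: "closed W \<and> W \<subseteq> a" and z: "z \<in> Tset T y W"
          have "T x W z" using B Z W y z unfolding Tset_def by blast
          hence "z \<in> Tset T x W" unfolding Tset_def by simp
          thus "z \<in> b" using x W unfolding cond_arrow_def by blast
        qed
      qed
    qed
  qed
  show "(\<forall>a b. a \<inter> cond_arrow T a b \<subseteq> b) \<longleftrightarrow> (\<forall>x. T x {x} x)"
  proof
    assume A: "\<forall>a b. a \<inter> cond_arrow T a b \<subseteq> b"
    show "\<forall>x. T x {x} x"
    proof
      fix x
      have "x \<in> {x} \<inter> cond_arrow T {x} (Tset T x {x})" using arrow_self[OF c sing] by blast
      thus "T x {x} x" using A unfolding Tset_def by blast
    qed
  next
    assume B: "\<forall>x. T x {x} x"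
    show "\<forall>a b. a \<inter> cond_arrow T a b \<subseteq> b"
    proof (intro allI subsetI)
      fix a b x assume x: "x \<in> a \<inter> cond_arrow T a b"
      have "{x} \<subseteq> a" using x by simp
      hence "Tset T x {x} \<subseteq> b" using x sing unfolding cond_arrow_def by blast
      moreover have "x \<in> Tset T x {x}" using B unfolding Tset_def by simp
      ultimately show "x \<in> b" by blast
    qed
  qed
  show "(\<forall>a b. cond_arrow T a b \<subseteq> cond_arrow T (- b) (- a)) \<longleftrightarrow>
      (\<forall>x y Y. closed Y \<and> T x Y y \<longrightarrow> (\<exists>z\<in>Y. T x {y} z))"
  proof
    assume A: "\<forall>a b. cond_arrow T a b \<subseteq> cond_arrow T (- b) (- a)"
    show "\<forall>x y Y. closed Y \<and> T x Y y \<longrightarrow> (\<exists>z\<in>Y. T x {y} z)"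
    proof (intro allI impI, rule ccontr)
      fix x y Y assume h: "closed Y \<and> T x Y y" and n: "\<not> (\<exists>z\<in>Y. T x {y} z)"
      have "x \<in> cond_arrow T {y} (Tset T x {y})" using arrow_self[OF c sing] by blast
      hence "x \<in> cond_arrow T (- Tset T x {y}) (- {y})" using A by blast
      moreover have "Y \<subseteq> - Tset T x {y}" using n unfolding Tset_def by blast
      ultimately show False using h unfolding cond_arrow_def Tset_def by blast
    qed
  next
    assume B: "\<forall>x y Y. closed Y \<and> T x Y y \<longrightarrow> (\<exists>z\<in>Y. T x {y} z)"
    show "\<forall>a b. cond_arrow T a b \<subseteq> cond_arrow T (- b) (- a)"
    proof (intro allI subsetI)
      fix a b x assume x: "x \<in> cond_arrow T a b"
      show "x \<in> cond_arrow T (- b) (- a)" 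
      proof (rule arrowI)
        fix Z w assume Z: "closed Z \<and> Z \<subseteq> - b" and w: "w \<in> Tset T x Z"
        show "w \<in> - a"
        proof
          assume "w \<in> a"
          hence wa: "{w} \<subseteq> a" by simp
          obtain z where z: "z \<in> Z" "T x {w} z" using B Z w unfolding Tset_def by blast
          have "Tset T x {w} \<subseteq> b" using x wa sing unfolding cond_arrow_def by blast
          hence "z \<in> b" using z unfolding Tset_def by blast
          thus False using z Z by blast
        qed
      qed
    qed
  qed
  show "(\<forall>a b c. - cond_arrow T a b \<subseteq> cond_arrow T c (- cond_arrow T a b)) \<longleftrightarrow>
      (\<forall>x y z Y Z. closed Y \<and> closed Z \<and> T x Y y \<and> T x Z z \<longrightarrow> T y Z z)"
  proof
    assume A: "\<forall>a b c. - cond_arrow T a b \<subseteq> cond_arrow T c (- cond_arrow T a b)"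
    show "\<forall>x y z Y Z. closed Y \<and> closed Z \<and> T x Y y \<and> T x Z z \<longrightarrow> T y Z z"
    proof (intro allI impI, rule ccontr)
      fix x y z Y Z assume h: "closed Y \<and> closed Z \<and> T x Y y \<and> T x Z z" and n: "\<not> T y Z z"
      have "x \<notin> cond_arrow T Z (Tset T y Z)" using h n arrow_closed[OF c] unfolding Tset_def by blast
      hence "x \<in> cond_arrow T Y (- cond_arrow T Z (Tset T y Z))" using A by blast
      hence "y \<notin> cond_arrow T Z (Tset T y Z)" using h arrow_closed[OF c] unfolding Tset_def by blast
      thus False using arrow_self[OF c] h by blast
    qed
  next
    assume B: "\<forall>x y z Y Z. closed Y \<and> closed Z \<and> T x Y y \<and> T x Z z \<longrightarrow> T y Z z"
    show "\<forall>a b c. - cond_arrow T a b \<subseteq> cond_arrow T c (- cond_arrow T a b)"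
    proof (intro allI subsetI)
      fix a b d x assume x: "x \<in> - cond_arrow T a b"
      then obtain W w where W: "closed W" "W \<subseteq> a" "T x W w" "w \<notin> b"
        unfolding cond_arrow_def Tset_def by blast
      show "x \<in> cond_arrow T d (- cond_arrow T a b)" 
      proof (rule arrowI)
        fix Z y assume Z: "closed Z \<and> Z \<subseteq> d" and y: "y \<in> Tset T x Z"
        have "T y W w" using B Z W y unfolding Tset_def by blast
        thus "y \<in> - cond_arrow T a b" using W unfolding cond_arrow_def Tset_def by blast
      qed
    qed
  qed
  show "(\<forall>a b c. cond_arrow T UNIV (- a \<union> b) \<inter> cond_arrow T b c \<subseteq> cond_arrow T a c) \<longleftrightarrow>
      (\<forall>x y Y Z. closed Y \<and> closed Z \<and> T x Y y \<and> Tset T x UNIV \<inter> Y \<subseteq> Z \<longrightarrow> T x Z y)"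
  proof
    assume A: "\<forall>a b c. cond_arrow T UNIV (- a \<union> b) \<inter> cond_arrow T b c \<subseteq> cond_arrow T a c"
    show "\<forall>x y Y Z. closed Y \<and> closed Z \<and> T x Y y \<and> Tset T x UNIV \<inter> Y \<subseteq> Z \<longrightarrow> T x Z y"
    proof (intro allI impI)
      fix x y Y Z assume h: "closed Y \<and> closed Z \<and> T x Y y \<and> Tset T x UNIV \<inter> Y \<subseteq> Z"
      have "x \<in> cond_arrow T Z (Tset T x Z)" using arrow_self[OF c] h by blast
      moreover have "x \<in> cond_arrow T UNIV (- Y \<union> Z)" using h arrow_closed[OF c closed_UNIV] by blast
      ultimately have "x \<in> cond_arrow T Y (Tset T x Z)" using A by blast
      thus "T x Z y" using h arrow_closed[OF c] unfolding Tset_def by blast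
    qed
  next
    assume B: "\<forall>x y Y Z. closed Y \<and> closed Z \<and> T x Y y \<and> Tset T x UNIV \<inter> Y \<subseteq> Z \<longrightarrow> T x Z y"
    show "\<forall>a b c. cond_arrow T UNIV (- a \<union> b) \<inter> cond_arrow T b c \<subseteq> cond_arrow T a c"
    proof (intro allI subsetI)
      fix a b d x assume x: "x \<in> cond_arrow T UNIV (- a \<union> b) \<inter> cond_arrow T b d"
      have "x \<in> cond_arrow T UNIV (- a \<union> b)" using x by blast
      hence x1: "Tset T x UNIV \<subseteq> - a \<union> b" using arrow_closed[OF c closed_UNIV] by simp
      have x2: "x \<in> cond_arrow T b d" using x by blast
      show "x \<in> cond_arrow T a d"
        
      proof (rule arrowI)
        fix W y assume W: "closed W \<and> W \<subseteq> a" and y: "y \<in> Tset T x W"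
        let ?Z = "Tset T x UNIV \<inter> W"
        have cZ: "closed ?Z" using W cs_Tset_closed[OF c closed_UNIV] by blast
        have "T x W y" using y unfolding Tset_def by simp
        hence "T x ?Z y" using B[rule_format, of W ?Z x y] W cZ by blast
        moreover have "?Z \<subseteq> b" using x1 W by blast
        ultimately show "y \<in> d" using arrowD[OF x2 cZ] by blast
      qed
    qed
  qed
qed

end
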